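(* Let $T(z) = z + c z^{d+1} + O(z^{d+2})$ be a holomorphic germ at $0$ with $c \neq 0$ and $d \geq 1$. Let $B_0$ be an open ball centred at a point $z_0$ such that for every $n\ge 0$ the backward iterate $T^{-n}$ is defined and univalent on $B_0$, and $T^{-n}\to 0$ uniformly on $B_0$ as $n\to\infty$. Put $B_n = T^{-n}(B_0)$ and $z_n = T^{-n}(z_0)$. Then there is a constant $C>0$ such that $d(z_n, \partial B_n) \geq C |z_n|^{d+1}$ for all sufficiently large $n$.
   Context: $d(z,\partial B)$ denotes the Euclidean distance from the point $z$ to the boundary of the set $B$. *)

theory Defs
  imports "HOL-Complex_Analysis.Complex_Analysis"
begin

end

theory Submission
  imports Defs
begin

fun EE :: "nat \<Rightarrow> complex \<Rightarrow> complex" where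
  "EE 0 x = 0" | "EE (Suc m) x = of_nat m + (1+x) * EE m x"

lemma EE_id: "(1+x)^m = 1 + of_nat m * x + x^2 * EE m x"
  by (induction m) (auto simp: algebra_simps power2_eq_square)

lemma EE_bound: "norm x \<le> 1 \<Longrightarrow> norm (EE m x) \<le> 4^m"
proof (induction m)
  case 0 then show ?case by simp
next
  case (Suc m)
  have "norm (EE (Suc m) x) \<le> of_nat m + norm (1+x) * norm (EE m x)"
    by (simp add: norm_mult[symmetric]) (metis norm_of_nat norm_triangle_ineq)
  also have "\<dots> \<le> of_nat m + 2 * 4^m"
  proof -
    have "norm (1+x) \<le> 2" using Suc.prems norm_triangle_ineq[of 1 x] by simp
    then show ?thesis using Suc by (simp add: mult_mono)
  qed
  also have "\<dots> \<le> 4^Suc m"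
  proof -
    have "m \<le> 2^m" by (simp add: less_exp less_imp_le)
    then have "real m \<le> real (2^m)" by (simp only: of_nat_le_iff)
    then have "real m \<le> 2^m" by simp
    also have "(2::real)^m \<le> 4^m" by (simp add: power_mono)
    finally have "real m \<le> 4^m" .
    moreover have "(0::real) \<le> 4^m" by simp
    ultimately show ?thesis by (simp only: power_Suc)
  qed
  finally show ?case .
qed

lemma EE_cont: "isCont (EE m) x"
  by (induction m) (auto intro!: continuous_intros)

lemma infdist_frontier_ge:
  fixes S :: "complex set"
  assumes "ball x s \<subseteq> S" "frontier S \<noteq> {}"
  shows "s \<le> infdist x (frontier S)"
proof -
  have "ball x s \<subseteq> interior S" using assms(1) by (simp add: interior_maximal)
  then have "\<And>y. y \<in> frontier S \<Longrightarrow> s \<le> dist x y"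
    by (auto simp: frontier_def subset_iff not_less[symmetric])
  then show ?thesis using assms(2) by (simp add: infdist_notempty cINF_greatest)
qed

lemma prod_ge_1_minus_sum:
  fixes x :: "nat \<Rightarrow> real"
  assumes "finite F" "\<And>k. k \<in> F \<Longrightarrow> 0 \<le> x k \<and> x k \<le> 1"
  shows "1 - sum x F \<le> (\<Prod>k\<in>F. 1 - x k)"
  using assms
proof (induction F rule: finite_induct)
  case empty then show ?case by simp
next
  case (insert a F)
  have xa: "0 \<le> x a" "x a \<le> 1" using insert.prems by auto
  have S: "0 \<le> sum x F" using insert.prems by (auto intro: sum_nonneg)
  have IH: "1 - sum x F \<le> (\<Prod>k\<in>F. 1 - x k)" using insert by auto
  have "(1 - x a) * (1 - sum x F) \<le> (1 - x a) * (\<Prod>k\<in>F. 1 - x k)"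
    using IH xa by (intro mult_left_mono) auto
  moreover have "1 - x a - sum x F \<le> (1 - x a) * (1 - sum x F)"
    using xa S by (simp add: algebra_simps)
  ultimately show ?case using insert by simp
qed

lemma F_lim:
  fixes T :: "complex \<Rightarrow> complex" and c :: complex
  assumes d1: "d \<ge> 1" and dl: "\<delta> > 0" and Mb: "\<And>z. norm z < \<delta> \<Longrightarrow> norm (T z - z - c*z^(d+1)) \<le> M * norm z^(d+2)"
  shows "((\<lambda>v. 1/v^d - 1/(T v)^d) \<longlongrightarrow> of_nat d * c) (at 0)"
proof -
  define h where "h z = T z - z - c*z^(d+1)" for z
  define s where "s v = c + h v / v^(d+1)" for v
  define q where "q v = 1 + v^d * s v" for v
  have h0: "((\<lambda>v. h v / v^(d+1)) \<longlongrightarrow> 0) (at (0::complex))"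
  proof (rule Lim_null_comparison)
    have "eventually (\<lambda>v. v \<in> ball 0 \<delta> - {0}) (at (0::complex))"
      using dl by (intro eventually_at_in_open) auto
    then show "eventually (\<lambda>v. norm (h v / v^(d+1)) \<le> M * norm v) (at (0::complex))"
    proof (rule eventually_mono)
      fix v :: complex assume v: "v \<in> ball 0 \<delta> - {0}"
      then have "norm (h v) \<le> M * norm v ^ (d+2)" using Mb[of v] by (simp add: h_def)
      moreover have "M * norm v ^ (d+2) = M * norm v * norm v^(d+1)" by simp
      moreover have "norm v^(d+1) > 0" using v by simp
      ultimately have "norm (h v) / norm v^(d+1) \<le> M * norm v"
        by (simp add: pos_divide_le_eq)
      then show "norm (h v / v^(d+1)) \<le> M * norm v" by (simp add: norm_divide norm_power norm_mult)
    qed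
    show "((\<lambda>v. M * norm v) \<longlongrightarrow> 0) (at (0::complex))"
      by (auto intro!: tendsto_eq_intros)
  qed
  have s_lim: "(s \<longlongrightarrow> c) (at 0)"
    unfolding s_def using tendsto_add[OF tendsto_const h0] by simp
  have vd: "((\<lambda>v::complex. v^d) \<longlongrightarrow> 0) (at 0)"
  proof -
    have "((\<lambda>v::complex. v^d) \<longlongrightarrow> 0^d) (at 0)" by (intro tendsto_intros)
    then show ?thesis using assms by (cases d) auto
  qed
  have x_lim: "((\<lambda>v. v^d * s v) \<longlongrightarrow> 0) (at 0)"
    using tendsto_mult[OF vd s_lim] by simp
  have q_lim: "(q \<longlongrightarrow> 1) (at 0)"
    unfolding q_def using tendsto_add[OF tendsto_const x_lim] by simp
  have E_lim: "((\<lambda>v. EE d (v^d * s v)) \<longlongrightarrow> EE d 0) (at 0)"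
    using isCont_tendsto_compose[OF EE_cont x_lim] .
  define G where "G v = (of_nat d * s v + v^d * (s v)^2 * EE d (v^d * s v)) / (q v)^d" for v
  have G_lim: "(G \<longlongrightarrow> of_nat d * c) (at 0)"
  proof -
    have "(G \<longlongrightarrow> (of_nat d * c + 0 * c^2 * EE d 0) / 1^d) (at 0)"
      unfolding G_def by (intro tendsto_intros s_lim vd E_lim q_lim) auto
    then show ?thesis by simp
  qed
  have ev: "eventually (\<lambda>v. q v \<noteq> 0 \<and> v \<noteq> 0) (at (0::complex))"
  proof (rule eventually_conj)
    show "eventually (\<lambda>v. q v \<noteq> 0) (at (0::complex))"
      using tendsto_imp_eventually_ne[OF q_lim] by simp
    show "eventually (\<lambda>v. v \<noteq> 0) (at (0::complex))" by (simp add: eventually_at_filter)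
  qed
  show ?thesis
  proof (rule Lim_transform_eventually[OF G_lim])
    show "eventually (\<lambda>v. G v = 1/v^d - 1/(T v)^d) (at 0)"
    proof (rule eventually_mono[OF ev])
      fix v :: complex assume v: "q v \<noteq> 0 \<and> v \<noteq> 0"
      have Tv: "T v = v * q v" using v unfolding q_def s_def h_def by (simp add: field_simps)
      have qd: "(q v)^d = 1 + of_nat d * (v^d * s v) + (v^d * s v)^2 * EE d (v^d * s v)"
        unfolding q_def by (rule EE_id)
      have "1/v^d - 1/(T v)^d = ((q v)^d - 1) / (v^d * (q v)^d)"
        using v by (simp add: Tv power_mult_distrib field_simps)
      also have "(q v)^d - 1 = v^d * (of_nat d * s v + v^d * (s v)^2 * EE d (v^d * s v))"
        using qd by (simp add: algebra_simps power2_eq_square)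
      also have "v^d * (of_nat d * s v + v^d * (s v)^2 * EE d (v^d * s v)) / (v^d * (q v)^d) = G v"
        using v unfolding G_def by (subst mult_divide_mult_cancel_left) auto
      finally show "G v = 1/v^d - 1/(T v)^d" by simp
    qed
  qed
qed

lemma growth_summable:
  fixes w :: "nat \<Rightarrow> complex" and T :: "complex \<Rightarrow> complex" and c :: complex
  assumes d1: "d \<ge> 1" and c: "c \<noteq> 0"
   and Flim: "((\<lambda>v. 1/v^d - 1/(T v)^d) \<longlongrightarrow> of_nat d * c) (at 0)"
   and wlim: "w \<longlonglongrightarrow> 0" and nz: "\<And>n. n \<ge> N \<Longrightarrow> w n \<noteq> 0"
   and wT: "\<And>n. n \<ge> N \<Longrightarrow> T (w (Suc n)) = w n"
  shows "summable (\<lambda>n. norm (w n)^(d+1))"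
proof -
  define D where "D = of_nat d * c"
  have D: "D \<noteq> 0" "norm D > 0" using d1 c by (auto simp: D_def)
  define F where "F v = 1/v^d - 1/(T v)^d" for v
  define \<psi> where "\<psi> n = 1/(w n)^d" for n
  have fl: "filterlim (\<lambda>n. w (Suc n)) (at 0) sequentially"
  proof (rule filterlim_atI)
    show "((\<lambda>n. w (Suc n)) \<longlongrightarrow> 0) sequentially" using wlim by (rule LIMSEQ_Suc)
    show "eventually (\<lambda>n. w (Suc n) \<noteq> 0) sequentially"
      using eventually_ge_at_top[of N] by eventually_elim (simp add: nz)
  qed
  have Fw: "((\<lambda>n. F (w (Suc n))) \<longlongrightarrow> D) sequentially"
    using filterlim_compose[OF Flim fl] unfolding F_def D_def by simp
  have "eventually (\<lambda>n. dist (F (w (Suc n))) D < norm D / 2) sequentially"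
    using Fw D unfolding tendsto_iff by (meson half_gt_zero)
  then obtain N1 where N1: "\<And>n. n \<ge> N1 \<Longrightarrow> dist (F (w (Suc n))) D < norm D / 2"
    by (auto simp: eventually_sequentially)
  define N2 where "N2 = max N N1"
  define \<gamma> where "\<gamma> = cnj D"
  have stepR: "Re (\<gamma> * \<psi> (Suc n)) \<ge> Re (\<gamma> * \<psi> n) + norm D^2/2" if n: "n \<ge> N2" for n
  proof -
    have "\<psi> (Suc n) - \<psi> n = F (w (Suc n))"
      using wT[of n] n unfolding \<psi>_def F_def N2_def by simp
    moreover have "Re (\<gamma> * F (w (Suc n))) \<ge> norm D^2/2"
    proof -
      have "\<gamma> * F (w (Suc n)) = \<gamma> * D + \<gamma> * (F (w (Suc n)) - D)" by (simp add: algebra_simps)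
      moreover have "Re (\<gamma> * D) = norm D^2" unfolding \<gamma>_def
        using cmod_power2[of D] by (simp add: power2_eq_square)
      moreover have "Re (\<gamma> * (F (w (Suc n)) - D)) \<ge> - (norm D * (norm D / 2))"
      proof -
        have fd: "norm (F (w (Suc n)) - D) \<le> norm D / 2"
          using N1[of n] n unfolding N2_def by (simp add: dist_norm)
        have "norm (\<gamma> * (F (w (Suc n)) - D)) \<le> norm D * (norm D / 2)"
          using mult_left_mono[OF fd norm_ge_zero[of D]] unfolding \<gamma>_def by (simp add: norm_mult)
        then show ?thesis using abs_Re_le_cmod[of "\<gamma> * (F (w (Suc n)) - D)"] by linarith
      qed
      ultimately show ?thesis by (simp add: power2_eq_square)
    qed
    ultimately show ?thesis by (simp add: algebra_simps)
  qed
  have lin: "Re (\<gamma> * \<psi> n) \<ge> Re (\<gamma> * \<psi> N2) + (real n - real N2) * (norm D^2/2)" if "n \<ge> N2" for n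
    using that
  proof (induction n rule: dec_induct)
    case base then show ?case by simp
  next
    case (step n)
    have "Re (\<gamma> * \<psi> (Suc n)) \<ge> Re (\<gamma> * \<psi> n) + norm D^2/2" using step.hyps(1) by (rule stepR)
    moreover have "(real (Suc n) - real N2) * (norm D^2/2) = (real n - real N2) * (norm D^2/2) + norm D^2/2"
      by (simp add: field_simps)
    ultimately show ?case using step.IH by linarith
  qed
  have lower: "norm (\<psi> n) \<ge> (real n - real N2) * (norm D/2) - norm (\<psi> N2)" if n: "n \<ge> N2" for n
  proof -
    have a: "Re (\<gamma> * \<psi> n) \<le> norm D * norm (\<psi> n)"
      using complex_Re_le_cmod[of "\<gamma> * \<psi> n"] by (simp add: \<gamma>_def norm_mult)
    have b: "Re (\<gamma> * \<psi> N2) \<ge> - (norm D * norm (\<psi> N2))"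
      using abs_Re_le_cmod[of "\<gamma> * \<psi> N2"] by (simp add: \<gamma>_def norm_mult)
    have "norm D * ((real n - real N2) * (norm D/2) - norm (\<psi> N2)) \<le> norm D * norm (\<psi> n)"
    proof -
      have e: "norm D * ((real n - real N2) * (norm D/2) - norm (\<psi> N2)) = (real n - real N2) * (norm D^2/2) - norm D * norm (\<psi> N2)"
        by (simp add: algebra_simps power2_eq_square)
      show ?thesis unfolding e using a b lin[OF n] by linarith
    qed
    then show ?thesis using D by (simp add: mult_le_cancel_left_pos)
  qed
  obtain N3 :: nat where N3: "real N3 \<ge> 2*real N2 + 4*norm (\<psi> N2)/norm D + 1"
    using real_arch_simple by blast
  have N3ge: "N3 \<ge> N2" "N3 \<ge> 1"
  proof -
    have "4*norm (\<psi> N2)/norm D \<ge> 0" using D by simp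
    then have "real N3 \<ge> real N2 + 1" using N3 by linarith
    then show "N3 \<ge> N2" "N3 \<ge> 1" by linarith+
  qed
  have psi_big: "norm (\<psi> n) \<ge> real n * norm D / 4" if n: "n \<ge> N3" for n
  proof -
    have "real n \<ge> 2*real N2 + 4*norm (\<psi> N2)/norm D" using N3 n by linarith
    then have "real n * norm D / 4 \<ge> (2*real N2 + 4*norm (\<psi> N2)/norm D) * norm D / 4"
      using D by (simp add: mult_right_mono divide_right_mono)
    also have "(2*real N2 + 4*norm (\<psi> N2)/norm D) * norm D / 4 = real N2 * norm D/2 + norm (\<psi> N2)"
      using D by (simp add: field_simps)
    finally have "real n * norm D / 4 \<ge> real N2 * norm D/2 + norm (\<psi> N2)" .
    moreover have "norm (\<psi> n) \<ge> (real n - real N2) * (norm D/2) - norm (\<psi> N2)"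
      using lower N3ge n by simp
    ultimately show ?thesis by (simp add: algebra_simps)
  qed
  define p :: real where "p = (real d + 1) / real d"
  have p1: "p > 1" using d1 by (simp add: p_def)
  have bound: "norm (w n)^(d+1) \<le> (4/norm D) powr p * real n powr (-p)" if n: "n \<ge> N3" for n
  proof -
    have npos: "real n > 0" using n N3ge by simp
    have wn: "norm (w n) > 0" using nz[of n] n N3ge N2_def by simp
    have "norm (\<psi> n) = 1 / norm (w n)^d" by (simp add: \<psi>_def norm_divide norm_power)
    then have "norm (w n)^d = 1 / norm (\<psi> n)" using wn by simp
    also have "\<dots> \<le> 1 / (real n * norm D / 4)"
    proof -
      have hp: "real n * norm D / 4 > 0" using npos D by simp
      then have "norm (\<psi> n) > 0" using psi_big[OF n] by linarith
      then show ?thesis using psi_big[OF n] hp by (intro divide_left_mono mult_pos_pos) auto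
    qed
    also have "\<dots> = (4/norm D) / real n" by simp
    finally have le: "norm (w n)^d \<le> (4/norm D) / real n" .
    have "norm (w n)^(d+1) = (norm (w n)^d) powr p"
    proof -
      have "(norm (w n)^d) powr p = (norm (w n) powr real d) powr p" using wn by (simp add: powr_realpow)
      also have "\<dots> = norm (w n) powr (real d * p)" by (simp add: powr_powr)
      also have "real d * p = real (d+1)" using d1 by (simp add: p_def)
      also have "norm (w n) powr real (d+1) = norm (w n)^(d+1)" using wn by (rule powr_realpow)
      finally show ?thesis by simp
    qed
    also have "\<dots> \<le> ((4/norm D) / real n) powr p"
      using le p1 by (intro powr_mono2) auto
    also have "\<dots> = (4/norm D) powr p / real n powr p"
      using D npos by (simp add: powr_divide powr_mult)
    also have "\<dots> = (4/norm D) powr p * real n powr (-p)"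
      by (simp add: powr_minus divide_inverse)
    finally show ?thesis .
  qed
  show ?thesis
  proof (rule summable_comparison_test_ev)
    show "eventually (\<lambda>n. norm (norm (w n)^(d+1)) \<le> (4/norm D) powr p * real n powr (-p)) sequentially"
      using eventually_ge_at_top[of N3] by eventually_elim (use bound in auto)
    show "summable (\<lambda>n. (4/norm D) powr p * real n powr (-p))"
      using p1 by (intro summable_mult) (simp add: summable_real_powr_iff)
  qed
qed

theorem lemma3p2:
  fixes T :: "complex \<Rightarrow> complex" and U :: "complex set"
    and c :: complex and d :: nat
    and z0 :: complex and r :: real
    and g :: "nat \<Rightarrow> complex \<Rightarrow> complex"
  assumes U: "open U" "0 \<in> U"
    and holT: "T holomorphic_on U"
    and germ: "\<exists>M \<delta>. \<delta> > 0 \<and> (\<forall>z. norm z < \<delta> \<longrightarrow>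
                 norm (T z - z - c * z ^ (d + 1)) \<le> M * norm z ^ (d + 2))"
    and c: "c \<noteq> 0" and d: "d \<ge> 1"
    and r: "r > 0"
    and g0: "\<And>w. w \<in> ball z0 r \<Longrightarrow> g 0 w = w"
    and gU: "\<And>n w. w \<in> ball z0 r \<Longrightarrow> g (Suc n) w \<in> U"
    and gT: "\<And>n w. w \<in> ball z0 r \<Longrightarrow> T (g (Suc n) w) = g n w"
    and ghol: "\<And>n. g n holomorphic_on ball z0 r"
    and ginj: "\<And>n. inj_on (g n) (ball z0 r)"
    and gunif: "uniform_limit (ball z0 r) g (\<lambda>_. 0) sequentially"
  shows "\<exists>C > 0. \<forall>\<^sub>F n in sequentially.
           infdist (g n z0) (frontier (g n ` ball z0 r)) \<ge> C * norm (g n z0) ^ (d + 1)"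
proof -
  obtain M0 \<delta> where \<delta>: "\<delta> > 0" and Mb0: "\<forall>z. norm z < \<delta> \<longrightarrow> norm (T z - z - c * z ^ (d + 1)) \<le> M0 * norm z ^ (d + 2)"
    using germ by blast
  define M where "M = max M0 0"
  have M: "M \<ge> 0" by (simp add: M_def)
  have Mb: "norm (T z - z - c*z^(d+1)) \<le> M * norm z^(d+2)" if "norm z < \<delta>" for z
  proof -
    have "M0 * norm z^(d+2) \<le> M * norm z^(d+2)" by (simp add: M_def mult_right_mono)
    then show ?thesis using Mb0 that by fastforce
  qed
  have T0: "T 0 = 0" using Mb[of 0] \<delta> by simp
  obtain \<delta>U where \<delta>U: "\<delta>U > 0" "ball 0 \<delta>U \<subseteq> U" using U by (meson openE)
  define \<delta>0 where "\<delta>0 = min 1 (min \<delta> \<delta>U)"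
  have \<delta>0: "0 < \<delta>0" "\<delta>0 \<le> 1" "\<delta>0 \<le> \<delta>" "ball 0 \<delta>0 \<subseteq> U"
    using \<delta> \<delta>U by (auto simp: \<delta>0_def)
  define h where "h = (\<lambda>z. T z - z - c*z^(d+1))"
  have hb: "norm (h z) \<le> M * norm z^(d+2)" if "norm z < \<delta>0" for z
    using Mb[of z] that \<delta>0 by (simp add: h_def)
  have holh: "h holomorphic_on U" unfolding h_def using holT by (intro holomorphic_intros)
  have cauchy: "norm (deriv h v) \<le> M * (norm v + \<rho>)^(d+2) / \<rho>" if \<rho>: "0 < \<rho>" "norm v + \<rho> < \<delta>0" for v \<rho>
  proof -
    have sub: "cball v \<rho> \<subseteq> ball 0 \<delta>0"
    proof
      fix x assume "x \<in> cball v \<rho>"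
      then have "norm (v - x) \<le> \<rho>" by (simp add: dist_norm)
      moreover have "norm x - norm v \<le> norm (x - v)" by (rule norm_triangle_ineq2)
      ultimately show "x \<in> ball 0 \<delta>0" using \<rho> by (simp add: norm_minus_commute)
    qed
    have "norm ((deriv ^^ 1) h v) \<le> fact 1 * (M * (norm v + \<rho>)^(d+2)) / \<rho>^1"
    proof (rule Cauchy_inequality)
      show "h holomorphic_on ball v \<rho>" using holh sub \<delta>0(4)
        by (meson ball_subset_cball holomorphic_on_subset order_trans)
      show "continuous_on (cball v \<rho>) h" using holh sub \<delta>0(4)
        by (meson holomorphic_on_imp_continuous_on continuous_on_subset order_trans)
      show "0 < \<rho>" by fact
      fix x assume x: "norm (v - x) = \<rho>"
      have nx: "norm x \<le> norm v + \<rho>"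
        using norm_triangle_ineq2[of x v] x by (simp add: norm_minus_commute)
      then have "norm x < \<delta>0" using \<rho> by linarith
      then have "norm (h x) \<le> M * norm x^(d+2)" by (rule hb)
      also have "\<dots> \<le> M * (norm v + \<rho>)^(d+2)" using nx M by (intro mult_left_mono power_mono) auto
      finally show "norm (h x) \<le> M * (norm v + \<rho>)^(d+2)" .
    qed
    then show ?thesis by simp
  qed
  have dT: "deriv T u = 1 + of_nat (d+1) * c * u^d + deriv h u" if "u \<in> U" for u
  proof -
    have DT: "(T has_field_derivative deriv T u) (at u)" using holT U(1) that by (rule holomorphic_derivI)
    have "(h has_field_derivative deriv T u - 1 - c * (of_nat (d+1) * (1 * u^(d+1 - Suc 0)))) (at u)"
    proof -
      have P1: "((\<lambda>z. c * z^(d+1)) has_field_derivative c * (of_nat (d+1) * (1 * u^(d+1 - Suc 0)))) (at u)"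
        by (intro DERIV_cmult DERIV_power[of "\<lambda>x. x", OF DERIV_ident])
      show ?thesis unfolding h_def by (intro derivative_intros DT P1)
    qed
    then have "(h has_field_derivative deriv T u - 1 - c * (of_nat (d+1) * u^d)) (at u)" by simp
    then have "deriv h u = deriv T u - 1 - c * (of_nat (d+1) * u^d)" by (rule DERIV_imp_deriv)
    then show ?thesis by (simp add: algebra_simps)
  qed
  define \<delta>1 where "\<delta>1 = \<delta>0/2"
  have cb1: "cball 0 \<delta>1 \<subseteq> U" using \<delta>0 by (auto simp: \<delta>1_def)
  have hol2: "deriv (deriv T) holomorphic_on U" using holT U(1) by (intro holomorphic_deriv)
  obtain B2 where B2: "B2 \<ge> 0" "\<And>u. u \<in> cball 0 \<delta>1 \<Longrightarrow> norm (deriv (deriv T) u) \<le> B2"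
  proof -
    have "compact (deriv (deriv T) ` cball 0 \<delta>1)"
      by (intro compact_continuous_image continuous_on_subset[OF holomorphic_on_imp_continuous_on[OF hol2] cb1]) simp
    then obtain B where "\<forall>x\<in>deriv (deriv T) ` cball 0 \<delta>1. norm x \<le> B"
      using compact_imp_bounded bounded_iff by metis
    then show thesis by (intro that[of "max B 0"]) force+
  qed
  have T'lip: "norm (deriv T u - deriv T v) \<le> B2 * norm (u - v)" if "u \<in> ball 0 \<delta>1" "v \<in> ball 0 \<delta>1" for u v
  proof (rule field_differentiable_bound[where S="ball (0::complex) \<delta>1" and f'="deriv (deriv T)"])
    fix z :: complex assume z: "z \<in> ball 0 \<delta>1"
    then have "z \<in> U" using cb1 by auto
    then show "(deriv T has_field_derivative deriv (deriv T) z) (at z within ball 0 \<delta>1)"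
      using holomorphic_deriv[OF holT U(1)] U(1) by (intro holomorphic_derivI)
    show "norm (deriv (deriv T) z) \<le> B2" using z B2 by auto
  qed (use that in auto)

  define K1 where "K1 = 2 * M * (3/2)^(d+2)"
  define K where "K = K1 + B2 + real (d+1) * M + 4^(d+1) * (norm c + M)^2"
  define \<Lambda> where "\<Lambda> = real (d+1) * norm c + M * 2^(d+2)"
  define \<rho>0 where "\<rho>0 = min (\<delta>1/2) (min (1/(2*(\<Lambda>+1))) (1/(4*K+1)))"
  have K1: "K1 \<ge> 0" using M by (simp add: K1_def)
  have K: "K \<ge> 0" using K1 B2 M by (simp add: K_def)
  have \<Lambda>: "\<Lambda> \<ge> 0" using M by (simp add: \<Lambda>_def)
  have \<Lambda>c: "norm c + M \<le> \<Lambda>"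
  proof -
    have "norm c \<le> real (d+1) * norm c" by (simp add: mult_le_cancel_right1)
    moreover have "M * 1 \<le> M * 2^(d+2)"
    proof -
      have two: "(1::real) \<le> 2^(d+2)" by (rule one_le_power) simp
      show ?thesis using mult_left_mono[OF two M] .
    qed
    ultimately show ?thesis by (simp add: \<Lambda>_def)
  qed
  have \<rho>0: "0 < \<rho>0" "\<rho>0 \<le> \<delta>1/2" "\<rho>0 * \<Lambda> \<le> 1/2" "\<rho>0 * (4*K) \<le> 1" "\<rho>0 \<le> 1"
  proof -
    show "0 < \<rho>0" using \<delta>0 \<Lambda> K by (simp add: \<rho>0_def \<delta>1_def)
    show "\<rho>0 \<le> \<delta>1/2" by (simp add: \<rho>0_def)
    have "\<rho>0 \<le> 1/(2*(\<Lambda>+1))" by (simp add: \<rho>0_def)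
    then have "\<rho>0 * (2*(\<Lambda>+1)) \<le> 1" using \<Lambda> by (simp add: le_divide_eq)
    then show "\<rho>0 * \<Lambda> \<le> 1/2" using \<open>0 < \<rho>0\<close> by (simp add: algebra_simps)
    have "\<rho>0 \<le> 1/(4*K+1)" by (simp add: \<rho>0_def)
    then have "\<rho>0 * (4*K+1) \<le> 1" using K by (simp add: le_divide_eq)
    then show "\<rho>0 * (4*K) \<le> 1" using \<open>0 < \<rho>0\<close> by (simp add: algebra_simps)
    show "\<rho>0 \<le> 1" using \<delta>0 by (simp add: \<rho>0_def \<delta>1_def)
  qed
  have ball\<rho>0: "ball 0 (2*\<rho>0) \<subseteq> ball 0 \<delta>1" "\<delta>1 < \<delta>0" "ball 0 \<delta>1 \<subseteq> U"
    using \<rho>0 \<delta>0 cb1 by (auto simp: \<delta>1_def)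
  have T'near: "norm (deriv T u - 1) \<le> 1/2" if u: "norm u < \<rho>0" for u
  proof -
    have uU: "u \<in> U" using u ball\<rho>0 \<rho>0 by (auto simp: subset_iff)
    have "norm (deriv h u) \<le> M * (norm u + \<rho>0)^(d+2) / \<rho>0"
      using u \<rho>0 ball\<rho>0 by (intro cauchy) auto
    also have "\<dots> \<le> M * (2*\<rho>0)^(d+2) / \<rho>0"
      using u \<rho>0 M by (intro divide_right_mono mult_left_mono power_mono) auto
    also have "\<dots> = M * 2^(d+2) * \<rho>0^(d+1)" using \<rho>0 by (simp add: power_mult_distrib)
    also have "\<dots> \<le> M * 2^(d+2) * \<rho>0"
      using \<rho>0 M power_decreasing[of 1 "d+1" \<rho>0] by (intro mult_left_mono) auto
    finally have a: "norm (deriv h u) \<le> M * 2^(d+2) * \<rho>0" .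
    have "norm (of_nat (d+1) * c * u^d) = real (d+1) * norm c * norm u^d" by (simp only: norm_mult norm_power norm_of_nat)
    also have "\<dots> \<le> real (d+1) * norm c * \<rho>0"
    proof -
      have "norm u^d \<le> \<rho>0^d" using u by (intro power_mono) auto
      also have "\<dots> \<le> \<rho>0" using \<rho>0 d power_decreasing[of 1 d \<rho>0] by auto
      finally show ?thesis by (intro mult_left_mono) auto
    qed
    finally have b: "norm (of_nat (d+1) * c * u^d) \<le> real (d+1) * norm c * \<rho>0" .
    have "norm (deriv T u - 1) = norm (of_nat (d+1) * c * u^d + deriv h u)" using dT[OF uU] by simp
    also have "\<dots> \<le> norm (of_nat (d+1) * c * u^d) + norm (deriv h u)" by (rule norm_triangle_ineq)
    also have "\<dots> \<le> \<rho>0 * \<Lambda>" using a b by (simp add: \<Lambda>_def algebra_simps)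
    finally show ?thesis using \<rho>0 by linarith
  qed
  have injT: "inj_on T (ball 0 \<rho>0)"
  proof (rule inj_onI)
    fix u v assume u: "u \<in> ball 0 \<rho>0" and v: "v \<in> ball 0 \<rho>0" and eq: "T u = T v"
    have "norm ((T u - u) - (T v - v)) \<le> 1/2 * norm (u - v)"
    proof (rule field_differentiable_bound[where S="ball (0::complex) \<rho>0" and f'="\<lambda>z. deriv T z - 1"])
      fix z :: complex assume z: "z \<in> ball 0 \<rho>0"
      then have "z \<in> U" using ball\<rho>0 \<rho>0 by (auto simp: subset_iff)
      then have "(T has_field_derivative deriv T z) (at z within ball 0 \<rho>0)"
        using holT U(1) by (intro holomorphic_derivI)
      then show "((\<lambda>z. T z - z) has_field_derivative deriv T z - 1) (at z within ball 0 \<rho>0)"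
        by (auto intro!: derivative_eq_intros)
      show "norm (deriv T z - 1) \<le> 1/2" using z by (intro T'near) auto
    qed (use u v in auto)
    then have "norm (u - v) \<le> 1/2 * norm (u - v)" using eq by (simp add: norm_minus_commute)
    then show "u = v" by simp
  qed
  define P where "P v = norm (1 + of_nat (d+1) * c * v^d)" for v
  have P: "P v \<ge> 1/2" if "norm v < \<rho>0" for v
  proof -
    have "norm (of_nat (d+1) * c * v^d) \<le> real (d+1) * norm c * \<rho>0"
    proof -
      have "norm v^d \<le> \<rho>0^d" using that by (intro power_mono) auto
      also have "\<dots> \<le> \<rho>0" using \<rho>0 d power_decreasing[of 1 d \<rho>0] by auto
      finally have "real (d+1) * norm c * norm v^d \<le> real (d+1) * norm c * \<rho>0"
        by (intro mult_left_mono) auto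
      then show ?thesis by (simp only: norm_mult norm_power norm_of_nat)
    qed
    moreover have "real (d+1) * norm c * \<rho>0 \<le> \<rho>0 * \<Lambda>" using M \<rho>0 by (simp add: \<Lambda>_def algebra_simps)
    moreover have "1 - norm (of_nat (d+1) * c * v^d) \<le> P v"
      using norm_triangle_ineq2[of 1 "- (of_nat (d+1) * c * v^d)"] by (simp add: P_def)
    ultimately show ?thesis using \<rho>0 by linarith
  qed

  have F2: "norm (T v)^(d+1) \<ge> norm v^(d+1) * (P v - K * norm v^(d+1))" if v: "v \<noteq> 0" "norm v < \<rho>0" for v
  proof -
    define a where "a = c * v ^ d + h v / v"
    have Tv: "T v = v * (1 + a)" using v(1) by (simp add: a_def h_def field_simps)
    have nv1: "norm v \<le> 1" "norm v < \<delta>0" using v \<rho>0 ball\<rho>0 by (auto simp: \<delta>1_def)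
    have pd: "norm v^(d+1) \<le> norm v^d" using nv1 power_decreasing[of d "d+1" "norm v"] by auto
    have vd\<rho>: "norm v^d \<le> \<rho>0"
    proof -
      have "norm v^d \<le> \<rho>0^d" using v by (intro power_mono) auto
      also have "\<dots> \<le> \<rho>0" using \<rho>0 d power_decreasing[of 1 d \<rho>0] by auto
      finally show ?thesis .
    qed
    have hv: "norm (h v / v) \<le> M * norm v^(d+1)"
    proof -
      have "norm (h v) \<le> M * norm v^(d+2)" using hb nv1 by auto
      moreover have "M * norm v ^ (d+2) = M * norm v^(d+1) * norm v" by simp
      ultimately have le: "norm (h v) \<le> M * norm v^(d+1) * norm v" by linarith
      have "norm v > 0" using v by simp
      then have "norm (h v) / norm v \<le> M * norm v^(d+1)" using le by (simp only: pos_divide_le_eq)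
      then show ?thesis by (simp add: norm_divide)
    qed
    have na: "norm a \<le> (norm c + M) * norm v^d"
    proof -
      have "norm a \<le> norm c * norm v^d + M * norm v^(d+1)"
        unfolding a_def using hv norm_triangle_ineq[of "c * v^d" "h v / v"] by (simp add: norm_mult norm_power)
      also have "\<dots> \<le> norm c * norm v^d + M * norm v^d" using pd M by (intro add_left_mono mult_left_mono) auto
      finally show ?thesis by (simp add: algebra_simps)
    qed
    have na1: "norm a \<le> 1"
    proof -
      have "(norm c + M) * norm v^d \<le> \<Lambda> * \<rho>0" using \<Lambda>c vd\<rho> M \<Lambda> by (intro mult_mono) auto
      then show ?thesis using na \<rho>0 by (simp add: algebra_simps)
    qed
    have id: "(1+a)^(d+1) = (1 + of_nat (d+1)*c * v^d) + (of_nat (d+1) * (h v / v) + a^2 * EE (d+1) a)"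
      using EE_id[of a "d+1"] by (simp add: a_def algebra_simps)
    have e2: "norm (a^2 * EE (d+1) a) \<le> (norm c + M)^2 * norm v^(d+1) * 4^(d+1)"
    proof -
      have "norm (a^2) \<le> ((norm c + M) * norm v^d)^2" using na by (simp add: norm_power power_mono)
      also have "\<dots> = (norm c + M)^2 * norm v^(2*d)" by (simp add: power_mult_distrib power_even_eq)
      also have "\<dots> \<le> (norm c + M)^2 * norm v^(d+1)"
        using nv1 d power_decreasing[of "d+1" "2*d" "norm v"] by (intro mult_left_mono) auto
      finally have "norm (a^2) \<le> (norm c + M)^2 * norm v^(d+1)" .
      moreover have "norm (EE (d+1) a) \<le> 4^(d+1)" using na1 by (rule EE_bound)
      ultimately show ?thesis by (simp add: norm_mult mult_mono)
    qed
    have "norm (of_nat (d+1) * (h v / v) + a^2 * EE (d+1) a) \<le> K * norm v^(d+1)"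
    proof -
      have "norm (of_nat (d+1) * (h v / v) + a^2 * EE (d+1) a)
            \<le> real (d+1) * (M * norm v^(d+1)) + (norm c + M)^2 * norm v^(d+1) * 4^(d+1)"
      proof -
        have n1: "norm (of_nat (d+1) * (h v / v)) \<le> real (d+1) * (M * norm v^(d+1))"
          unfolding norm_mult norm_of_nat by (rule mult_left_mono[OF hv]) simp
        show ?thesis using n1 e2 norm_triangle_ineq[of "of_nat (d+1) * (h v / v)" "a^2 * EE (d+1) a"]
          by linarith
      qed
      also have "\<dots> \<le> K * norm v^(d+1)"
        using K1 B2 by (simp add: K_def algebra_simps)
      finally show ?thesis .
    qed
    then have "norm ((1+a)^(d+1)) \<ge> P v - K * norm v^(d+1)"
      unfolding id P_def using norm_diff_ineq[of "1 + of_nat (d+1)*c * v^d" "of_nat (d+1) * (h v / v) + a^2 * EE (d+1) a"]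
      by linarith
    moreover have "norm (T v)^(d+1) = norm v^(d+1) * norm ((1+a)^(d+1))"
      by (simp add: Tv norm_mult norm_power power_mult_distrib)
    ultimately show ?thesis by (simp add: mult_left_mono)
  qed
  have F3: "norm (T u - T v) \<le> (P v + K * norm v^(d+1)) * norm (u - v)"
    if v: "v \<noteq> 0" "norm v < \<rho>0" and u: "u \<in> ball v (norm v^(d+1))" for u v
  proof -
    define S where "S = ball v (norm v^(d+1))"
    have nv1: "norm v \<le> 1" using v \<rho>0 by auto
    have pv: "norm v^(d+1) \<le> norm v" using nv1 power_decreasing[of 1 "d+1" "norm v"] by auto
    have Ssub: "S \<subseteq> ball 0 \<delta>1"
    proof
      fix z assume "z \<in> S"
      then have "norm (v - z) < norm v^(d+1)" by (simp add: S_def dist_norm)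
      moreover have "norm z - norm v \<le> norm (v - z)"
        using norm_triangle_ineq2[of z v] by (simp add: norm_minus_commute)
      ultimately have "norm z < 2 * \<rho>0" using pv v(2) by linarith
      then have "z \<in> ball 0 (2*\<rho>0)" by simp
      then show "z \<in> ball 0 \<delta>1" using ball\<rho>0(1) by blast
    qed
    have vS: "v \<in> S" using v by (simp add: S_def)
    have dhv: "norm (deriv h v) \<le> K1 * norm v^(d+1)"
    proof -
      have "norm (deriv h v) \<le> M * (norm v + norm v/2)^(d+2) / (norm v/2)"
        using v \<rho>0 by (intro cauchy) (auto simp: \<delta>1_def)
      also have "\<dots> = K1 * norm v^(d+1)"
        using v by (simp add: K1_def power_mult_distrib field_simps)
      finally show ?thesis .
    qed
    have vU: "v \<in> U" using vS Ssub ball\<rho>0 by auto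
    have T'v: "norm (deriv T v) \<le> P v + K1 * norm v^(d+1)"
      using dT[OF vU] dhv norm_triangle_ineq[of "1 + of_nat (d+1) * c * v^d" "deriv h v"]
      by (simp add: P_def)
    show ?thesis
    proof (rule field_differentiable_bound[where S=S and f'="deriv T"])
      show "convex S" by (simp add: S_def)
      fix z assume z: "z \<in> S"
      then have zU: "z \<in> U" using Ssub ball\<rho>0 by auto
      then show "(T has_field_derivative deriv T z) (at z within S)"
        using holT U(1) by (intro holomorphic_derivI)
      have "norm (deriv T z - deriv T v) \<le> B2 * norm (z - v)" using z vS Ssub by (intro T'lip) auto
      also have "\<dots> \<le> B2 * norm v^(d+1)" using z B2 by (intro mult_left_mono) (auto simp: S_def dist_norm norm_minus_commute)
      finally have "norm (deriv T z) \<le> norm (deriv T v) + B2 * norm v^(d+1)"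
        using norm_triangle_ineq2[of "deriv T z" "deriv T v"] by linarith
      moreover have "(K1 + B2) * norm v^(d+1) \<le> K * norm v^(d+1)"
        using M by (intro mult_right_mono) (auto simp: K_def)
      ultimately show "norm (deriv T z) \<le> P v + K * norm v^(d+1)"
        using T'v by (simp add: algebra_simps)
    qed (use vS u S_def in auto)
  qed
  have z0: "z0 \<in> ball z0 r" using r by simp
  define w where "w = (\<lambda>n. g n z0)"
  have wlim: "w \<longlonglongrightarrow> 0" using tendsto_uniform_limitI[OF gunif z0] by (simp add: w_def)
  obtain Nu where Nu: "\<And>n y. n \<ge> Nu \<Longrightarrow> y \<in> ball z0 r \<Longrightarrow> norm (g n y) < \<rho>0/2"
  proof -
    have "\<forall>\<^sub>F n in sequentially. \<forall>y\<in>ball z0 r. dist (g n y) 0 < \<rho>0/2"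
      using uniform_limitD[OF gunif, of "\<rho>0/2"] \<rho>0(1) by simp
    then obtain N0 where "\<forall>n\<ge>N0. \<forall>y\<in>ball z0 r. dist (g n y) 0 < \<rho>0/2"
      by (auto simp: eventually_sequentially)
    then show thesis using that[of N0] by simp
  qed
  have wT: "T (w (Suc n)) = w n" for n using gT[OF z0] by (simp add: w_def)
  have wsmall: "norm (w n) < \<rho>0/2" if "n \<ge> Nu" for n using Nu[OF that z0] by (simp add: w_def)
  have zero_iff: "w (Suc n) = 0 \<longleftrightarrow> w n = 0" if n: "n \<ge> Nu" for n
  proof
    assume "w (Suc n) = 0" then show "w n = 0" using wT[of n] T0 by simp
  next
    assume "w n = 0"
    then have "T (w (Suc n)) = T 0" using wT[of n] T0 by simp
    moreover have "w (Suc n) \<in> ball 0 \<rho>0" "0 \<in> ball 0 \<rho>0" using wsmall[of "Suc n"] n \<rho>0 by auto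
    ultimately show "w (Suc n) = 0" using injT by (meson inj_onD)
  qed
  define B where "B n = g n ` ball z0 r" for n
  have Bopen: "open (B n)" for n unfolding B_def using ghol ginj by (intro open_mapping_thm3) auto
  have front: "frontier (B n) \<noteq> {}" if n: "n \<ge> Nu" for n
  proof -
    have "B n \<noteq> {}" using z0 by (auto simp: B_def)
    moreover have "B n \<noteq> UNIV"
    proof
      assume "B n = UNIV"
      then have "of_real \<rho>0 \<in> B n" by simp
      then obtain y where "y \<in> ball z0 r" "g n y = of_real \<rho>0" by (auto simp: B_def)
      then show False using Nu[OF n] \<rho>0 by fastforce
    qed
    ultimately show ?thesis by (simp add: frontier_eq_empty)
  qed
  show ?thesis
  proof (cases "w Nu = 0")
    case True
    have "w n = 0" if "n \<ge> Nu" for n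
      using that
    proof (induction n rule: dec_induct)
      case base then show ?case using True .
    next
      case (step n) then show ?case using zero_iff by auto
    qed
    then have "\<forall>n\<ge>Nu. 1 * norm (g n z0) ^ (d + 1) \<le> infdist (g n z0) (frontier (g n ` ball z0 r))"
      by (auto simp: w_def infdist_nonneg)
    then show ?thesis
      by (intro exI[of _ 1]) (auto simp only: eventually_sequentially)
  next
    case False
    have nz: "w n \<noteq> 0" if "n \<ge> Nu" for n
      using that
    proof (induction n rule: dec_induct)
      case base then show ?case using False .
    next
      case (step n) then show ?case using zero_iff by auto
    qed
    have Flim: "((\<lambda>v. 1/v^d - 1/(T v)^d) \<longlongrightarrow> of_nat d * c) (at 0)"
      by (rule F_lim[OF d \<delta> Mb])
    have summ: "summable (\<lambda>n. norm (w n)^(d+1))"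
      by (rule growth_summable[OF d c Flim wlim nz wT])
    define x where "x k = 4*K*norm (w k)^(d+1)" for k
    have sx: "summable x" unfolding x_def using summ by (intro summable_mult)
    obtain N4 where N4: "\<And>m n. m \<ge> N4 \<Longrightarrow> norm (sum x {m..<n}) < 1/2"
      using sx unfolding summable_Cauchy by (meson half_gt_zero zero_less_one)
    define N where "N = max Nu N4"
    have x01: "0 \<le> x k \<and> x k \<le> 1" if "k \<ge> Nu" for k
    proof -
      have "norm (w k) \<le> 1" using wsmall[OF that] \<rho>0 by linarith
      then have "norm (w k)^(d+1) \<le> norm (w k)" using power_decreasing[of 1 "d+1" "norm (w k)"] by auto
      also have "\<dots> \<le> \<rho>0" using wsmall[OF that] \<rho>0 by linarith
      finally have "4*K*norm (w k)^(d+1) \<le> 4*K*\<rho>0" using K by (intro mult_left_mono) auto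
      then show ?thesis using K \<rho>0 by (simp add: x_def algebra_simps)
    qed
    define Q where "Q n = (\<Prod>k\<in>{N<..n}. 1 - x k)" for n
    have Q: "1/2 \<le> Q n \<and> Q n \<le> 1" if "n \<ge> N" for n
    proof
      have xs: "\<And>k. k \<in> {N<..n} \<Longrightarrow> 0 \<le> x k \<and> x k \<le> 1" using x01 by (auto simp: N_def)
      have eq: "{N<..n} = {Suc N..<Suc n}" by auto
      have eq2: "sum x {N<..n} = sum x {Suc N..<Suc n}" by (simp only: eq)
      have "norm (sum x {Suc N..<Suc n}) < 1/2" using N4[of "Suc N" "Suc n"] by (simp add: N_def)
      then have "sum x {N<..n} < 1/2" unfolding eq2 real_norm_def by linarith
      moreover have "1 - sum x {N<..n} \<le> Q n"
        unfolding Q_def by (rule prod_ge_1_minus_sum) (use xs in auto)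
      ultimately show "1/2 \<le> Q n" by linarith
      show "Q n \<le> 1" unfolding Q_def by (rule prod_le_1) (use xs in auto)
    qed
    define A where "A n = norm (w n)^(d+1)" for n
    have Apos: "A n > 0" if "n \<ge> Nu" for n using nz[OF that] by (simp add: A_def)
    have wN: "w N \<in> B N" using z0 by (simp add: w_def B_def)
    obtain \<epsilon> where \<epsilon>: "\<epsilon> > 0" "ball (w N) \<epsilon> \<subseteq> B N" using Bopen wN by (meson openE)
    define c0 where "c0 = min 1 (\<epsilon> / A N)"
    have ANpos: "A N > 0" using Apos by (simp add: N_def)
    have c0: "c0 > 0" "c0 \<le> 1" "c0 * A N \<le> \<epsilon>"
    proof -
      show "c0 > 0" using \<epsilon> ANpos by (simp add: c0_def)
      show "c0 \<le> 1" by (simp add: c0_def)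
      have "c0 \<le> \<epsilon> / A N" by (simp add: c0_def)
      then show "c0 * A N \<le> \<epsilon>" using ANpos by (simp add: pos_le_divide_eq)
    qed
    define \<sigma> where "\<sigma> n = c0 * A n * Q n" for n
    have inv: "ball (w n) (\<sigma> n) \<subseteq> B n" if "n \<ge> N" for n
      using that
    proof (induction n rule: dec_induct)
      case base
      have "\<sigma> N = c0 * A N" by (simp add: \<sigma>_def Q_def)
      then have "ball (w N) (\<sigma> N) \<subseteq> ball (w N) \<epsilon>" using c0 by (intro subset_ball) simp
      then show ?case using \<epsilon>(2) by blast
    next
      case (step n)
      have nN: "n \<ge> Nu" "Suc n \<ge> Nu" using step.hyps by (auto simp: N_def)
      define v where "v = w (Suc n)"
      have v0: "v \<noteq> 0" using nz[OF nN(2)] by (simp add: v_def)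
      have vs: "norm v < \<rho>0/2" using wsmall[OF nN(2)] by (simp add: v_def)
      have vr: "norm v < \<rho>0" using vs \<rho>0 by linarith
      have nv1: "norm v \<le> 1" using vr \<rho>0 by linarith
      have pv: "norm v^(d+1) \<le> norm v" using nv1 power_decreasing[of 1 "d+1" "norm v"] by auto
      have Tv: "T v = w n" using wT[of n] by (simp add: v_def)
      define e where "e = K * norm v^(d+1)"
      have e0: "e \<ge> 0" using K by (simp add: e_def)
      have xS: "x (Suc n) = 4*e" by (simp add: x_def e_def v_def)
      have Pv: "P v \<ge> 1/2" using P[OF vr] .
      have QS: "Q (Suc n) = Q n * (1 - x (Suc n))"
      proof -
        have "{N<..Suc n} = insert (Suc n) {N<..n}" using step.hyps by auto
        then show ?thesis by (simp add: Q_def mult.commute)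
      qed
      have Qn: "1/2 \<le> Q n" "Q n \<le> 1" using Q[OF step.hyps(1)] by auto
      have x1: "0 \<le> x (Suc n)" "x (Suc n) \<le> 1" using x01[OF nN(2)] by auto
      have AS: "A (Suc n) = norm v^(d+1)" by (simp add: A_def v_def)
      have AS0: "A (Suc n) \<ge> 0" by (simp add: AS)
      have An: "A (Suc n) * (P v - e) \<le> A n"
        using F2[OF v0 vr] Tv by (simp add: A_def e_def v_def)
      have \<sigma>S: "\<sigma> (Suc n) = (c0 * Q n * (1 - x (Suc n))) * A (Suc n)" by (simp add: \<sigma>_def QS)
      have f01: "0 \<le> c0 * Q n * (1 - x (Suc n))" "c0 * Q n * (1 - x (Suc n)) \<le> 1"
      proof -
        show "0 \<le> c0 * Q n * (1 - x (Suc n))" using c0 Qn x1 by simp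
        have "c0 * Q n \<le> 1 * 1" using c0 Qn by (intro mult_mono) auto
        moreover have "0 \<le> c0 * Q n" using c0 Qn by simp
        ultimately have "c0 * Q n * (1 - x (Suc n)) \<le> 1 * 1" using x1 by (intro mult_mono) auto
        then show "c0 * Q n * (1 - x (Suc n)) \<le> 1" by simp
      qed
      have \<sigma>S0: "0 \<le> \<sigma> (Suc n)" unfolding \<sigma>S using f01 AS0 by simp
      have \<sigma>Sle: "\<sigma> (Suc n) \<le> norm v^(d+1)"
        unfolding \<sigma>S AS using mult_right_mono[OF f01(2), of "norm v^(d+1)"] by simp
      have key: "(P v + e) * \<sigma> (Suc n) \<le> \<sigma> n"
      proof -
        have alg: "(P v + e) * (1 - 4*e) \<le> P v - e"
        proof -
          have "e * (4 * P v - 2) \<ge> 0" using e0 Pv by simp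
          moreover have "(P v + e) * (1 - 4*e) = P v - 4*(e*P v) + e - 4*e^2"
            by (simp add: algebra_simps power2_eq_square)
          moreover have "e * (4 * P v - 2) = 4*(e*P v) - 2*e" by (simp add: algebra_simps)
          moreover have "e^2 \<ge> 0" by simp
          ultimately show ?thesis by linarith
        qed
        have cq: "0 \<le> c0 * Q n * A (Suc n)" using c0 Qn AS0 by simp
        have "(P v + e) * \<sigma> (Suc n) = (c0 * Q n * A (Suc n)) * ((P v + e) * (1 - 4*e))"
          by (simp add: \<sigma>S xS algebra_simps)
        also have "\<dots> \<le> (c0 * Q n * A (Suc n)) * (P v - e)" by (rule mult_left_mono[OF alg cq])
        also have "\<dots> = (c0 * Q n) * (A (Suc n) * (P v - e))" by (simp add: algebra_simps)
        also have "\<dots> \<le> (c0 * Q n) * A n" using c0 Qn An by (intro mult_left_mono) auto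
        also have "\<dots> = \<sigma> n" by (simp add: \<sigma>_def algebra_simps)
        finally show ?thesis .
      qed
      have Ppos: "P v + e > 0" using Pv e0 by linarith
      show ?case
      proof
        fix u assume u: "u \<in> ball (w (Suc n)) (\<sigma> (Suc n))"
        then have uv: "dist v u < \<sigma> (Suc n)" by (simp add: v_def)
        have ub: "u \<in> ball v (norm v^(d+1))" using uv \<sigma>Sle by simp
        have "norm (T u - T v) \<le> (P v + e) * norm (u - v)" using F3[OF v0 vr ub] by (simp add: e_def)
        also have "\<dots> < (P v + e) * \<sigma> (Suc n)"
          using uv Ppos by (simp add: dist_norm norm_minus_commute)
        also have "\<dots> \<le> \<sigma> n" by (rule key)
        finally have "T u \<in> ball (w n) (\<sigma> n)" using Tv by (simp add: dist_norm norm_minus_commute)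
        then have "T u \<in> B n" using step.IH by blast
        then obtain y where y: "y \<in> ball z0 r" "T u = g n y" by (auto simp: B_def)
        have gy: "g (Suc n) y \<in> ball 0 \<rho>0" using Nu[OF nN(2) y(1)] \<rho>0 by simp
        have u\<rho>: "u \<in> ball 0 \<rho>0"
        proof -
          have "norm u - norm v \<le> norm (v - u)"
            using norm_triangle_ineq2[of u v] by (simp add: norm_minus_commute)
          moreover have "norm (v - u) < norm v^(d+1)" using ub by (simp add: dist_norm)
          ultimately have "norm u < 2 * norm v" using pv by linarith
          then show ?thesis using vs by simp
        qed
        have "T (g (Suc n) y) = T u" using gT[OF y(1)] y(2) by simp
        then have "g (Suc n) y = u" using injT gy u\<rho> by (meson inj_onD)
        then show "u \<in> B (Suc n)" using y(1) by (auto simp: B_def)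
      qed
    qed
    show ?thesis
    proof (intro exI[of _ "c0/2"] conjI)
      show "c0/2 > 0" using c0 by simp
      show "\<forall>\<^sub>F n in sequentially. c0 / 2 * norm (g n z0) ^ (d + 1) \<le> infdist (g n z0) (frontier (g n ` ball z0 r))"
        unfolding eventually_sequentially
      proof (intro exI[of _ N] allI impI)
        fix n assume n: "n \<ge> N"
        have "(c0 * A n) * (1/2) \<le> (c0 * A n) * Q n"
          using Q[OF n] c0 by (intro mult_left_mono) (auto simp: A_def)
        then have "c0/2 * norm (g n z0)^(d+1) \<le> \<sigma> n"
          by (simp add: \<sigma>_def A_def w_def)
        also have "\<sigma> n \<le> infdist (w n) (frontier (B n))"
          using inv[OF n] front[of n] n by (intro infdist_frontier_ge) (auto simp: N_def)
        finally show "c0 / 2 * norm (g n z0) ^ (d + 1) \<le> infdist (g n z0) (frontier (g n ` ball z0 r))"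
          by (simp add: w_def B_def)
      qed
    qed
  qed
qed

end
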